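(* Let $R$ be a ring, $n\ge 2$, and let $A=(a_{ij})\in\mathbb{M}_n(R)$ be a matrix such that $a_{i+1,i}=1$ for $1\le i\le n-1$ and $a_{ij}=0$ whenever $i>j+1$ (the entries $a_{ij}$ with $i\le j$ are arbitrary). Then for each $k=1,\dots,n$, the entries of $A^k=(b_{ij})$ satisfy: $b_{k+j-1,\,j}=a_{jj}+a_{j+1,j+1}+\cdots+a_{j+k-1,j+k-1}$ for $1\le j\le n-k+1$; $b_{k+j,\,j}=1$ for $1\le j\le n-k$; and $b_{ij}=0$ whenever $i>k+j$. In particular, the $(k,1)$-entry of $A^k$ is $a_{11}+\cdots+a_{kk}$, and the $(n,1)$-entry of $A^n$ is $a_{11}+\cdots+a_{nn}$.
   Context: All rings are associative with identity; $\mathbb{M}_n(R)$ denotes the ring of $n\times n$ matrices over $R$. *)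

theory Defs
  imports "Jordan_Normal_Form.Matrix"
begin

end

theory Submission
  imports Defs
begin

lemma entry_prod:
  fixes A B :: "'a :: ring_1 mat"
  assumes "A \<in> carrier_mat n n" "B \<in> carrier_mat n n" "i < n" "j < n"
  shows "(B * A) $$ (i, j) = (\<Sum>l\<in>{0..<n}. B $$ (i, l) * A $$ (l, j))"
  using assms by (simp add: scalar_prod_def)

lemma main_ind:
  fixes A :: "'a :: ring_1 mat" and n :: nat
  assumes carr: "A \<in> carrier_mat n n"
    and sub: "\<And>i. i + 1 < n \<Longrightarrow> A $$ (i + 1, i) = 1"
    and low: "\<And>i j. i < n \<Longrightarrow> j < n \<Longrightarrow> i > j + 1 \<Longrightarrow> A $$ (i, j) = 0"
  shows "1 \<le> k \<Longrightarrow>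
            (\<forall>j. j + k \<le> n \<longrightarrow>
                 (A ^\<^sub>m k) $$ (k + j - 1, j) = (\<Sum>t\<in>{j..<j + k}. A $$ (t, t))) \<and>
            (\<forall>j. j + k < n \<longrightarrow> (A ^\<^sub>m k) $$ (k + j, j) = 1) \<and>
            (\<forall>i j. i < n \<and> j < n \<and> i > k + j \<longrightarrow> (A ^\<^sub>m k) $$ (i, j) = 0)"
proof (induction k rule: dec_induct)
  case base
  have "A ^\<^sub>m 1 = A" using carr by simp
  then show ?case using sub low by (auto simp: add.commute)
next
  case (step k)
  have k1: "1 \<le> k" using step.hyps by simp
  define B where "B = A ^\<^sub>m k"
  have Bc: "B \<in> carrier_mat n n" using carr B_def by simp
  have pw: "A ^\<^sub>m Suc k = B * A" by (simp add: B_def)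
  have IH1: "\<And>j. j + k \<le> n \<Longrightarrow> B $$ (k + j - 1, j) = (\<Sum>t\<in>{j..<j + k}. A $$ (t, t))"
    and IH2: "\<And>j. j + k < n \<Longrightarrow> B $$ (k + j, j) = 1"
    and IH3: "\<And>i j. i < n \<Longrightarrow> j < n \<Longrightarrow> i > k + j \<Longrightarrow> B $$ (i, j) = 0"
    using step.IH unfolding B_def by auto
  have Z: "\<And>i j l. i < n \<Longrightarrow> j < n \<Longrightarrow> l < n \<Longrightarrow> l \<noteq> j \<Longrightarrow> l \<noteq> j + 1 \<Longrightarrow> i \<le> k + j + 1
      \<Longrightarrow> B $$ (i, l) * A $$ (l, j) = 0 \<or> True" by simp
  have P3: "\<And>i j. i < n \<Longrightarrow> j < n \<Longrightarrow> i > Suc k + j \<Longrightarrow> (B * A) $$ (i, j) = 0"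
  proof -
    fix i j assume h: "i < n" "j < n" "i > Suc k + j"
    have "(B * A) $$ (i, j) = (\<Sum>l\<in>{0..<n}. B $$ (i, l) * A $$ (l, j))"
      using entry_prod[OF carr Bc h(1,2)] .
    also have "\<dots> = 0"
    proof (rule sum.neutral, rule ballI)
      fix l assume l: "l \<in> {0..<n}"
      show "B $$ (i, l) * A $$ (l, j) = 0"
      proof (cases "l > j + 1")
        case True then show ?thesis using low[of l j] l h by auto
      next
        case False then show ?thesis using IH3[of i l] l h by auto
      qed
    qed
    finally show "(B * A) $$ (i, j) = 0" .
  qed
  have P2: "\<And>j. j + Suc k < n \<Longrightarrow> (B * A) $$ (Suc k + j, j) = 1"
  proof -
    fix j assume h: "j + Suc k < n"
    let ?f = "\<lambda>l. B $$ (Suc k + j, l) * A $$ (l, j)"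
    have "(B * A) $$ (Suc k + j, j) = sum ?f {0..<n}"
      using entry_prod[OF carr Bc] h by simp
    also have "\<dots> = ?f (j+1) + sum ?f ({0..<n} - {j+1})"
      by (rule sum.remove) (use h in auto)
    also have "sum ?f ({0..<n} - {j+1}) = 0"
    proof (rule sum.neutral, rule ballI)
      fix l assume l: "l \<in> {0..<n} - {j+1}"
      show "?f l = 0"
      proof (cases "l > j + 1")
        case True then show ?thesis using low[of l j] l h by auto
      next
        case False then show ?thesis using IH3[of "Suc k + j" l] l h by auto
      qed
    qed
    also have "?f (j+1) = 1" using IH2[of "j+1"] sub[of j] h by (simp add: add.commute add.left_commute)
    finally show "(B * A) $$ (Suc k + j, j) = 1" by simp
  qed
  have P1: "\<And>j. j + Suc k \<le> n \<Longrightarrow> (B * A) $$ (Suc k + j - 1, j) = (\<Sum>t\<in>{j..<j + Suc k}. A $$ (t, t))"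
  proof -
    fix j assume h: "j + Suc k \<le> n"
    let ?f = "\<lambda>l. B $$ (k + j, l) * A $$ (l, j)"
    have e: "Suc k + j - 1 = k + j" by simp
    have "(B * A) $$ (Suc k + j - 1, j) = sum ?f {0..<n}"
      unfolding e using entry_prod[OF carr Bc] h by simp
    also have "\<dots> = ?f j + sum ?f ({0..<n} - {j})"
      by (rule sum.remove) (use h in auto)
    also have "sum ?f ({0..<n} - {j}) = ?f (j+1) + sum ?f ({0..<n} - {j} - {j+1})"
      by (rule sum.remove) (insert h k1, auto)
    also have "sum ?f ({0..<n} - {j} - {j+1}) = 0"
    proof (rule sum.neutral, rule ballI)
      fix l assume l: "l \<in> {0..<n} - {j} - {j+1}"
      show "?f l = 0"
      proof (cases "l > j + 1")
        case True then show ?thesis using low[of l j] l h by auto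
      next
        case False then show ?thesis using IH3[of "k + j" l] l h by auto
      qed
    qed
    also have "?f j = A $$ (j, j)" using IH2[of j] h by simp
    also have "?f (j+1) = (\<Sum>t\<in>{j+1..<j + Suc k}. A $$ (t, t))"
      using IH1[of "j+1"] sub[of j] h by (simp add: add.commute add.left_commute)
    also have "A $$ (j, j) + ((\<Sum>t\<in>{j+1..<j + Suc k}. A $$ (t, t)) + 0)
        = (\<Sum>t\<in>{j..<j + Suc k}. A $$ (t, t))"
      by (simp add: sum.atLeast_Suc_lessThan)
    finally show "(B * A) $$ (Suc k + j - 1, j) = (\<Sum>t\<in>{j..<j + Suc k}. A $$ (t, t))" .
  qed
  show ?case unfolding pw using P1 P2 P3 by blast
qed

theorem lemma3p4:
  fixes A :: "'a :: ring_1 mat" and n :: nat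
  assumes carr: "A \<in> carrier_mat n n"
    and n2: "n \<ge> 2"
    and sub: "\<And>i. i + 1 < n \<Longrightarrow> A $$ (i + 1, i) = 1"
    and low: "\<And>i j. i < n \<Longrightarrow> j < n \<Longrightarrow> i > j + 1 \<Longrightarrow> A $$ (i, j) = 0"
  shows "(\<forall>k. 1 \<le> k \<and> k \<le> n \<longrightarrow>
            (\<forall>j. j + k \<le> n \<longrightarrow>
                 (A ^\<^sub>m k) $$ (k + j - 1, j) = (\<Sum>t\<in>{j..<j + k}. A $$ (t, t))) \<and>
            (\<forall>j. j + k < n \<longrightarrow> (A ^\<^sub>m k) $$ (k + j, j) = 1) \<and>
            (\<forall>i j. i < n \<and> j < n \<and> i > k + j \<longrightarrow> (A ^\<^sub>m k) $$ (i, j) = 0))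
      \<and> (\<forall>k. 1 \<le> k \<and> k \<le> n \<longrightarrow>
            (A ^\<^sub>m k) $$ (k - 1, 0) = (\<Sum>t<k. A $$ (t, t)))
      \<and> (A ^\<^sub>m n) $$ (n - 1, 0) = (\<Sum>t<n. A $$ (t, t))"
proof -
  have C2: "\<forall>k. 1 \<le> k \<and> k \<le> n \<longrightarrow> (A ^\<^sub>m k) $$ (k - 1, 0) = (\<Sum>t<k. A $$ (t, t))"
  proof (intro allI impI)
    fix k assume "1 \<le> k \<and> k \<le> n"
    then have "(A ^\<^sub>m k) $$ (k + 0 - 1, 0) = (\<Sum>t\<in>{0..<0 + k}. A $$ (t, t))"
      using main_ind[OF carr sub low, of k] by (metis add_0)
    then show "(A ^\<^sub>m k) $$ (k - 1, 0) = (\<Sum>t<k. A $$ (t, t))" by (simp add: atLeast0LessThan)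
  qed
  show ?thesis using main_ind[OF carr sub low] C2 n2 by auto
qed

end
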